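(* Let $S,T$ be totally ordered sets and $M\colon S\times T\to\mathbf{Vec}$ pointwise finite-dimensional such that for all $x\le x'$ in $S$, $y\le y'$ in $T$, with $a=(x,y),b=(x,y'),c=(x',y),d=(x',y')$, the sequence $0\to M_a\to M_b\oplus M_c\to M_d\to0$ (maps $(M(a\le b),M(a\le c))$ and $M(b\le d)-M(c\le d)$) is exact. Then $\ker M^{\rightarrow}\cap\ker M^{\uparrow}=0$ and $M=\operatorname{Im}M^{\leftarrow}+\operatorname{Im}M^{\downarrow}$.
   Context: For $(p_1,p_2)\in S\times T$ define subspaces of $M_{(p_1,p_2)}$: $\operatorname{Im}M^{\leftarrow}_{(p_1,p_2)}=\bigcap_{q\le p_1}\operatorname{Im}M((q,p_2)\le(p_1,p_2))$, $\operatorname{Im}M^{\downarrow}_{(p_1,p_2)}=\bigcap_{q\le p_2}\operatorname{Im}M((p_1,q)\le(p_1,p_2))$, $\ker M^{\rightarrow}_{(p_1,p_2)}=\bigcup_{q\ge p_1}\ker M((p_1,p_2)\le(q,p_2))$, $\ker M^{\uparrow}_{(p_1,p_2)}=\bigcup_{q\ge p_2}\ker M((p_1,p_2)\le(p_1,q))$. For pointwise finite-dimensional $M$ these are submodules of $M$; $\operatorname{Im}M^{\leftarrow}+\operatorname{Im}M^{\downarrow}$ is the pointwise sum. *)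

theory Defs
  imports Complex_Main
begin

definition ple :: "('s::linorder \<times> 't::linorder) \<Rightarrow> 's \<times> 't \<Rightarrow> bool" where
  "ple p q \<longleftrightarrow> fst p \<le> fst q \<and> snd p \<le> snd q"

text \<open>All stalks V p are subspaces of one ambient k-vector space (scale), and
  F p q is the structure map M(p \<le> q), acting on V p.\<close>
definition pfd_module ::
  "('k::field \<Rightarrow> 'v::ab_group_add \<Rightarrow> 'v) \<Rightarrow> ('s::linorder \<times> 't::linorder \<Rightarrow> 'v set)
   \<Rightarrow> ('s \<times> 't \<Rightarrow> 's \<times> 't \<Rightarrow> 'v \<Rightarrow> 'v) \<Rightarrow> bool" where
  "pfd_module scale V F \<longleftrightarrow>
     vector_space scale \<and>
     (\<forall>p. module.subspace scale (V p)) \<and>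
     (\<forall>p. \<exists>B. finite B \<and> B \<subseteq> V p \<and> V p \<subseteq> module.span scale B) \<and>
     (\<forall>p q. ple p q \<longrightarrow>
        (\<forall>x\<in>V p. F p q x \<in> V q) \<and>
        (\<forall>x\<in>V p. \<forall>y\<in>V p. F p q (x + y) = F p q x + F p q y) \<and>
        (\<forall>c. \<forall>x\<in>V p. F p q (scale c x) = scale c (F p q x))) \<and>
     (\<forall>p. \<forall>x\<in>V p. F p p x = x) \<and>
     (\<forall>p q r. ple p q \<longrightarrow> ple q r \<longrightarrow> (\<forall>x\<in>V p. F q r (F p q x) = F p r x))"

text \<open>Exactness of 0 -> M_a -> M_b (+) M_c -> M_d -> 0 for a=(x,y), b=(x,y'),
  c=(x',y), d=(x',y'), with maps u |-> (M(a<=b) u, M(a<=c) u) and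
  (v,w) |-> M(b<=d) v - M(c<=d) w.\<close>
definition square_exact ::
  "('s::linorder \<times> 't::linorder \<Rightarrow> 'v::ab_group_add set)
   \<Rightarrow> ('s \<times> 't \<Rightarrow> 's \<times> 't \<Rightarrow> 'v \<Rightarrow> 'v) \<Rightarrow> 's \<Rightarrow> 's \<Rightarrow> 't \<Rightarrow> 't \<Rightarrow> bool" where
  "square_exact V F x x' y y' \<longleftrightarrow>
     (let a = (x, y); b = (x, y'); c = (x', y); d = (x', y') in
       (\<forall>u\<in>V a. F a b u = 0 \<and> F a c u = 0 \<longrightarrow> u = 0) \<and>
       (\<forall>v\<in>V b. \<forall>w\<in>V c. F b d v - F c d w = 0 \<longleftrightarrow>
            (\<exists>u\<in>V a. v = F a b u \<and> w = F a c u)) \<and>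
       (\<forall>z\<in>V d. \<exists>v\<in>V b. \<exists>w\<in>V c. z = F b d v - F c d w))"

definition Im_left where
  "Im_left V F p = (\<Inter>q\<in>{q. q \<le> fst p}. F (q, snd p) p ` V (q, snd p))"

definition Im_down where
  "Im_down V F p = (\<Inter>q\<in>{q. q \<le> snd p}. F (fst p, q) p ` V (fst p, q))"

definition ker_right where
  "ker_right V F p = (\<Union>q\<in>{q. fst p \<le> q}. {v\<in>V p. F p (q, snd p) v = 0})"

definition ker_up where
  "ker_up V F p = (\<Union>q\<in>{q. snd p \<le> q}. {v\<in>V p. F p (fst p, q) v = 0})"

end

theory Submission
  imports Defs
begin

lemma (in vector_space) subspace_dim_le_eq:
  assumes "subspace S" "S \<subseteq> T" "T \<subseteq> span B" "finite B" "dim T \<le> dim S"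
  shows "T \<subseteq> S"
proof -
  obtain BS where BS: "BS \<subseteq> S" "independent BS" "S \<subseteq> span BS" "card BS = dim S"
    by (rule basis_exists)
  obtain BT where BT: "BS \<subseteq> BT" "BT \<subseteq> T" "independent BT" "T \<subseteq> span BT"
    using maximal_independent_subset_extend[of BS T] BS assms(2) by blast
  have cT: "card BT = dim T" using basis_card_eq_dim BT by blast
  have fin: "finite BT" using independent_span_bound[OF assms(4) BT(3)] BT(2) assms(3) by blast
  have "BS = BT" using card_seteq[OF fin BT(1)] cT BS(4) assms(5) by simp
  then show ?thesis using BT(4) span_minimal[OF BS(1) assms(1)] by blast
qed

lemma chain_min:
  fixes I :: "'a::linorder \<Rightarrow> 'v::ab_group_add set"
    and scale :: "'k::field \<Rightarrow> 'v \<Rightarrow> 'v"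
  assumes vs: "vector_space scale"
    and sub: "\<forall>q\<in>Q. module.subspace scale (I q)"
    and sp: "\<forall>q\<in>Q. I q \<subseteq> module.span scale B" and fin: "finite B"
    and mono: "\<forall>q\<in>Q. \<forall>q'\<in>Q. q \<le> q' \<longrightarrow> I q \<subseteq> I q'"
    and ne: "Q \<noteq> {}"
  shows "\<exists>q0\<in>Q. (\<Inter>q\<in>Q. I q) = I q0"
proof -
  interpret vs: vector_space scale by (rule vs)
  obtain q1 where q1: "q1 \<in> Q" using ne by blast
  define n where "n = (LEAST n. \<exists>q\<in>Q. vs.dim (I q) = n)"
  have "\<exists>q\<in>Q. vs.dim (I q) = n" unfolding n_def
    by (rule LeastI[of _ "vs.dim (I q1)"]) (use q1 in blast)
  then obtain q0 where q0: "q0 \<in> Q" "vs.dim (I q0) = n" by blast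
  have minn: "\<And>q. q \<in> Q \<Longrightarrow> n \<le> vs.dim (I q)" unfolding n_def
    by (rule Least_le) blast
  have "I q0 \<subseteq> I q" if "q \<in> Q" for q
  proof (cases "q0 \<le> q")
    case True then show ?thesis using mono q0 that by blast
  next
    case False
    then have "q \<le> q0" by simp
    then have "I q \<subseteq> I q0" using mono q0 that by blast
    then show ?thesis
      using vs.subspace_dim_le_eq[of "I q" "I q0" B] sub sp fin q0 minn[OF that] that by auto
  qed
  then show ?thesis using q0 by blast
qed


theorem lemma5p7:
  fixes scale :: "'k::field \<Rightarrow> 'v::ab_group_add \<Rightarrow> 'v"
    and V :: "'s::linorder \<times> 't::linorder \<Rightarrow> 'v set"
    and F :: "'s \<times> 't \<Rightarrow> 's \<times> 't \<Rightarrow> 'v \<Rightarrow> 'v"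
  assumes "pfd_module scale V F"
    and "\<And>x x' y y'. x \<le> x' \<Longrightarrow> y \<le> y' \<Longrightarrow> square_exact V F x x' y y'"
  shows "(\<forall>p. ker_right V F p \<inter> ker_up V F p = {0}) \<and>
         (\<forall>p. V p = {u + w |u w. u \<in> Im_left V F p \<and> w \<in> Im_down V F p})"
proof -
  note pm = assms(1)[unfolded pfd_module_def]
  have vsp: "vector_space scale" using pm by blast
  interpret vs: vector_space scale by (rule vsp)
  have subV: "\<And>p. vs.subspace (V p)" using pm by blast
  have V0: "\<And>p. 0 \<in> V p" using subV vs.subspace_0 by blast
  have fdim: "\<And>p. \<exists>B. finite B \<and> B \<subseteq> V p \<and> V p \<subseteq> vs.span B" using pm by blast
  have Fin: "\<And>p q x. ple p q \<Longrightarrow> x \<in> V p \<Longrightarrow> F p q x \<in> V q" using pm by blast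
  have Fadd: "\<And>p q x y. ple p q \<Longrightarrow> x \<in> V p \<Longrightarrow> y \<in> V p \<Longrightarrow> F p q (x + y) = F p q x + F p q y"
    using pm by blast
  have Fsc: "\<And>p q c x. ple p q \<Longrightarrow> x \<in> V p \<Longrightarrow> F p q (scale c x) = scale c (F p q x)"
    using pm by blast
  have Fid: "\<And>p x. x \<in> V p \<Longrightarrow> F p p x = x" using pm by blast
  have Fcomp: "\<And>p q r x. ple p q \<Longrightarrow> ple q r \<Longrightarrow> x \<in> V p \<Longrightarrow> F q r (F p q x) = F p r x"
    using pm by blast
  have F0: "\<And>p q. ple p q \<Longrightarrow> F p q 0 = 0"
    using Fadd V0 by (metis add.right_neutral add_left_cancel)
  have Fneg: "\<And>p q x. ple p q \<Longrightarrow> x \<in> V p \<Longrightarrow> F p q (- x) = - F p q x"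
  proof -
    fix p q x assume "ple p q" "x \<in> V p"
    then have "F p q (x + - x) = F p q x + F p q (- x)"
      using Fadd subV vs.subspace_neg by blast
    then show "F p q (- x) = - F p q x" using F0[OF \<open>ple p q\<close>]
      by (metis add.right_inverse add_minus_cancel neg_eq_iff_add_eq_0)
  qed
  have imsub: "vs.subspace (F p q ` V p)" if "ple p q" for p q
    unfolding vs.subspace_def
  proof (intro conjI ballI allI)
    show "0 \<in> F p q ` V p" using F0[OF that] V0 by (metis image_eqI)
  next
    fix x y assume "x \<in> F p q ` V p" "y \<in> F p q ` V p"
    then obtain a b where "a \<in> V p" "b \<in> V p" "x = F p q a" "y = F p q b" by blast
    then show "x + y \<in> F p q ` V p"
      using Fadd[OF that] subV vs.subspace_add by (metis image_eqI)
  next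
    fix c x assume "x \<in> F p q ` V p"
    then obtain a where "a \<in> V p" "x = F p q a" by blast
    then show "scale c x \<in> F p q ` V p"
      using Fsc[OF that] subV vs.subspace_scale by (metis image_eqI)
  qed
  have imV: "F p q ` V p \<subseteq> V q" if "ple p q" for p q using Fin that by blast
  have immono: "F p r ` V p \<subseteq> F q r ` V q" if "ple p q" "ple q r" for p q r
    using Fcomp[OF that] Fin[OF that(1)] by (metis image_eqI image_subsetI)
  have part1: "ker_right V F p \<inter> ker_up V F p = {0}" for p
  proof
    show "{0} \<subseteq> ker_right V F p \<inter> ker_up V F p"
    proof -
      have "F p (fst p, snd p) 0 = 0" using Fid[OF V0[of p]] by simp
      then have "0 \<in> ker_right V F p" unfolding ker_right_def using V0[of p] by (intro UN_I[of "fst p"]) auto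
      moreover have "0 \<in> ker_up V F p" unfolding ker_up_def using V0[of p] \<open>F p (fst p, snd p) 0 = 0\<close> by (intro UN_I[of "snd p"]) auto
      ultimately show ?thesis by blast
    qed
  next
    show "ker_right V F p \<inter> ker_up V F p \<subseteq> {0}"
    proof
      fix v assume "v \<in> ker_right V F p \<inter> ker_up V F p"
      then obtain q1 q2 where v: "v \<in> V p" "fst p \<le> q1" "F p (q1, snd p) v = 0"
        "snd p \<le> q2" "F p (fst p, q2) v = 0"
        unfolding ker_right_def ker_up_def by blast
      have "square_exact V F (fst p) q1 (snd p) q2" using assms(2) v by blast
      then show "v \<in> {0}" using v unfolding square_exact_def Let_def by simp
    qed
  qed
  have part2: "V p = {u + w |u w. u \<in> Im_left V F p \<and> w \<in> Im_down V F p}" for p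
  proof
    obtain x' y' where p: "p = (x', y')" by (cases p)
    obtain B where B: "finite B" "B \<subseteq> V p" "V p \<subseteq> vs.span B" using fdim by blast
    have "\<exists>q0\<in>{q. q \<le> x'}. (\<Inter>q\<in>{q. q \<le> x'}. F (q, y') p ` V (q, y')) = F (q0, y') p ` V (q0, y')"
    proof (rule chain_min[OF vsp _ _ B(1)])
      show "\<forall>q\<in>{q. q \<le> x'}. vs.subspace (F (q, y') p ` V (q, y'))"
        using imsub unfolding p ple_def by simp
      show "\<forall>q\<in>{q. q \<le> x'}. F (q, y') p ` V (q, y') \<subseteq> vs.span B"
        using imV B(3) unfolding p ple_def by fastforce
      show "\<forall>q\<in>{q. q \<le> x'}. \<forall>q'\<in>{q. q \<le> x'}. q \<le> q' \<longrightarrow> F (q, y') p ` V (q, y') \<subseteq> F (q', y') p ` V (q', y')"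
        using immono unfolding p ple_def by simp
      show "{q. q \<le> x'} \<noteq> {}" by blast
    qed
    then obtain q0 where q0: "q0 \<le> x'" "Im_left V F p = F (q0, y') p ` V (q0, y')"
      unfolding Im_left_def p by auto
    have "\<exists>r0\<in>{q. q \<le> y'}. (\<Inter>q\<in>{q. q \<le> y'}. F (x', q) p ` V (x', q)) = F (x', r0) p ` V (x', r0)"
    proof (rule chain_min[OF vsp _ _ B(1)])
      show "\<forall>q\<in>{q. q \<le> y'}. vs.subspace (F (x', q) p ` V (x', q))"
        using imsub unfolding p ple_def by simp
      show "\<forall>q\<in>{q. q \<le> y'}. F (x', q) p ` V (x', q) \<subseteq> vs.span B"
        using imV B(3) unfolding p ple_def by fastforce
      show "\<forall>q\<in>{q. q \<le> y'}. \<forall>q'\<in>{q. q \<le> y'}. q \<le> q' \<longrightarrow> F (x', q) p ` V (x', q) \<subseteq> F (x', q') p ` V (x', q')"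
        using immono unfolding p ple_def by simp
      show "{q. q \<le> y'} \<noteq> {}" by blast
    qed
    then obtain r0 where r0: "r0 \<le> y'" "Im_down V F p = F (x', r0) p ` V (x', r0)"
      unfolding Im_down_def p by auto
    show "V p \<subseteq> {u + w |u w. u \<in> Im_left V F p \<and> w \<in> Im_down V F p}"
    proof
      fix z assume z: "z \<in> V p"
      have "square_exact V F q0 x' r0 y'" using assms(2) q0 r0 by blast
      then obtain v w where vw: "v \<in> V (q0, y')" "w \<in> V (x', r0)"
        "z = F (q0, y') (x', y') v - F (x', r0) (x', y') w"
        using z unfolding square_exact_def Let_def p by blast
      have l1: "ple (q0, y') p" "ple (x', r0) p" using q0 r0 unfolding p ple_def by auto
      have "z = F (q0, y') p v + F (x', r0) p (- w)"
        using vw Fneg[OF l1(2) vw(2)] unfolding p by simp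
      moreover have "- w \<in> V (x', r0)" using vw subV vs.subspace_neg by blast
      ultimately show "z \<in> {u + w |u w. u \<in> Im_left V F p \<and> w \<in> Im_down V F p}"
        using q0 r0 vw by blast
    qed
  next
    have L: "Im_left V F p \<subseteq> V p"
      unfolding Im_left_def using Fid by force
    have D: "Im_down V F p \<subseteq> V p"
      unfolding Im_down_def using Fid by force
    show "{u + w |u w. u \<in> Im_left V F p \<and> w \<in> Im_down V F p} \<subseteq> V p"
      using L D subV vs.subspace_add by blast
  qed
  show ?thesis using part1 part2 by blast
qed

end
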